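(* Let $(H,R)$ be a semiquasitriangular Hopf algebra, let $u=S(R^{(2)})R^{(1)}$ be its Drinfeld element, and let $T:H\to H$ be the map $T(h)=R^{(2)}h_2R'^{(2)}S(h_1)S(R^{(1)})h_3R'^{(1)}$ (i.e. $T=\mu\circ\nu$, with $\mu$ the multiplication). Then $u$ is invertible with $u^{-1}=R^{(2)}S^2(R^{(1)})$, and $S^2(h)=u\,T(h)\,u^{-1}$ for all $h\in H$.
   Context: All vector spaces are over a field $k$, $\otimes=\otimes_k$. For a Hopf algebra $H$ with comultiplication $\Delta$, counit $\epsilon$, antipode $S$, we use Sweedler notation $\Delta(h)=h_1\otimes h_2$, etc. $\operatorname{Z}(H)$ is the centre of $H$. For $R\in H\otimes H$ we write $R=R^{(1)}\otimes R^{(2)}$ (summation understood); $R'^{(1)}\otimes R'^{(2)}$ denotes another copy of $R$. Definition (semiquasitriangular Hopf algebra): a pair $(H,R)$ with $H$ a Hopf algebra with bijective antipode and $R\in H\otimes H$ invertible such that (1) $R^{(1)}_1\otimes R^{(1)}_2\otimes R^{(2)} = R^{(1)}\otimes R'^{(1)}\otimes R^{(2)}R'^{(2)}$; (2) $R^{(1)}\otimes R^{(2)}_1\otimes R^{(2)}_2 = R^{(1)}R'^{(1)}\otimes R'^{(2)}\otimes R^{(2)}$; (3) $R^{(1)}\otimes R^{(2)}_2R'^{(1)}\otimes R^{(2)}_1R'^{(2)} = R^{(1)}\otimes R'^{(1)}R^{(2)}_1\otimes R'^{(2)}R^{(2)}_2$; (4) $R^{(1)}_2R'^{(1)}\otimes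 R^{(1)}_1R'^{(2)}\otimes R^{(2)} = R'^{(1)}R^{(1)}_1\otimes R'^{(2)}R^{(1)}_2\otimes R^{(2)}$; (5) $\nu(h):=R^{(2)}h_2R'^{(2)}\otimes S(h_1)S(R^{(1)})h_3R'^{(1)}\in H\otimes\operatorname{Z}(H)$ for all $h\in H$; (6) $\nu(h)=R^{(1)}h_2R'^{(1)}\otimes S(R'^{(2)})S(h_1)R^{(2)}h_3$ for all $h\in H$. The Drinfeld element of $(H,R)$ is $u:=S(R^{(2)})R^{(1)}$. *)

theory Defs
  imports Main "HOL.Vector_Spaces"
begin

text \<open>Elements of H (x) H and H (x) H (x) H are represented by finite formal sums of
pure tensors (lists of pairs / triples).  Two formal sums denote the same element of the
tensor product over the field k iff they agree under every functional f (x) g (resp.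
f (x) g (x) h) with f, g, h k-linear functionals on H (the canonical map
V (x) W -> (V* (x) W* )* is injective over a field).\<close>

type_synonym 'h tens2 = "('h \<times> 'h) list"
type_synonym 'h tens3 = "('h \<times> 'h \<times> 'h) list"

definition lin_fun :: "('k::field \<Rightarrow> 'h::ab_group_add \<Rightarrow> 'h) \<Rightarrow> ('h \<Rightarrow> 'k) \<Rightarrow> bool" where
  "lin_fun sc f \<longleftrightarrow> Vector_Spaces.linear sc ((*)) f"

definition teq2 :: "('k::field \<Rightarrow> 'h::ab_group_add \<Rightarrow> 'h) \<Rightarrow> 'h tens2 \<Rightarrow> 'h tens2 \<Rightarrow> bool" where
  "teq2 sc xs ys \<longleftrightarrow> (\<forall>(f::'h \<Rightarrow> 'k) g. lin_fun sc f \<and> lin_fun sc g \<longrightarrow>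
      (\<Sum>(a,b)\<leftarrow>xs. f a * g b) = (\<Sum>(a,b)\<leftarrow>ys. f a * g b))"

definition teq3 :: "('k::field \<Rightarrow> 'h::ab_group_add \<Rightarrow> 'h) \<Rightarrow> 'h tens3 \<Rightarrow> 'h tens3 \<Rightarrow> bool" where
  "teq3 sc xs ys \<longleftrightarrow> (\<forall>(f::'h \<Rightarrow> 'k) g h. lin_fun sc f \<and> lin_fun sc g \<and> lin_fun sc h \<longrightarrow>
      (\<Sum>(a,b,c)\<leftarrow>xs. f a * g b * h c) = (\<Sum>(a,b,c)\<leftarrow>ys. f a * g b * h c))"

definition tmul2 :: "'h::times tens2 \<Rightarrow> 'h tens2 \<Rightarrow> 'h tens2" where
  "tmul2 xs ys = [(a * c, b * d). (a,b) \<leftarrow> xs, (c,d) \<leftarrow> ys]"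

definition Delta3 :: "('h \<Rightarrow> 'h tens2) \<Rightarrow> 'h \<Rightarrow> 'h tens3" where
  "Delta3 \<Delta> h = [(x, y, b). (a,b) \<leftarrow> \<Delta> h, (x,y) \<leftarrow> \<Delta> a]"

definition central :: "'h::times \<Rightarrow> bool" where
  "central z \<longleftrightarrow> (\<forall>x. z * x = x * z)"

text \<open>H is a k-algebra (ring structure from the type class ring_1, scalar action sc),
with comultiplication \<Delta>, counit \<epsilon>, antipode S (bijective).\<close>
definition hopf_algebra ::
  "('k::field \<Rightarrow> 'h::ring_1 \<Rightarrow> 'h) \<Rightarrow> ('h \<Rightarrow> 'h tens2) \<Rightarrow> ('h \<Rightarrow> 'k) \<Rightarrow> ('h \<Rightarrow> 'h) \<Rightarrow> bool" where
  "hopf_algebra sc \<Delta> \<epsilon> S \<longleftrightarrow>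
     vector_space sc \<and>
     (\<forall>c a b. sc c (a * b) = sc c a * b \<and> sc c (a * b) = a * sc c b) \<and>
     (\<forall>a b. teq2 sc (\<Delta> (a + b)) (\<Delta> a @ \<Delta> b)) \<and>
     (\<forall>c a. teq2 sc (\<Delta> (sc c a)) [(sc c x, y). (x,y) \<leftarrow> \<Delta> a]) \<and>
     (\<forall>h. teq3 sc (Delta3 \<Delta> h) [(a, x, y). (a,b) \<leftarrow> \<Delta> h, (x,y) \<leftarrow> \<Delta> b]) \<and>
     lin_fun sc \<epsilon> \<and>
     (\<forall>h. (\<Sum>(a,b)\<leftarrow>\<Delta> h. sc (\<epsilon> a) b) = h \<and> (\<Sum>(a,b)\<leftarrow>\<Delta> h. sc (\<epsilon> b) a) = h) \<and>
     (\<forall>a b. teq2 sc (\<Delta> (a * b)) (tmul2 (\<Delta> a) (\<Delta> b))) \<and>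
     teq2 sc (\<Delta> 1) [(1, 1)] \<and>
     (\<forall>a b. \<epsilon> (a * b) = \<epsilon> a * \<epsilon> b) \<and> \<epsilon> 1 = 1 \<and>
     Vector_Spaces.linear sc sc S \<and>
     (\<forall>h. (\<Sum>(a,b)\<leftarrow>\<Delta> h. S a * b) = sc (\<epsilon> h) 1 \<and> (\<Sum>(a,b)\<leftarrow>\<Delta> h. a * S b) = sc (\<epsilon> h) 1) \<and>
     bij S"

definition nu :: "('h \<Rightarrow> 'h tens2) \<Rightarrow> ('h \<Rightarrow> 'h) \<Rightarrow> 'h::times tens2 \<Rightarrow> 'h \<Rightarrow> 'h tens2" where
  "nu \<Delta> S R h = [(s * y * s', S x * S r * z * r'). (r,s) \<leftarrow> R, (x,y,z) \<leftarrow> Delta3 \<Delta> h, (r',s') \<leftarrow> R]"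

definition semiquasitriangular ::
  "('k::field \<Rightarrow> 'h::ring_1 \<Rightarrow> 'h) \<Rightarrow> ('h \<Rightarrow> 'h tens2) \<Rightarrow> ('h \<Rightarrow> 'k) \<Rightarrow> ('h \<Rightarrow> 'h) \<Rightarrow> 'h tens2 \<Rightarrow> bool" where
  "semiquasitriangular sc \<Delta> \<epsilon> S R \<longleftrightarrow>
     hopf_algebra sc \<Delta> \<epsilon> S \<and>
     (\<exists>Ri. teq2 sc (tmul2 R Ri) [(1,1)] \<and> teq2 sc (tmul2 Ri R) [(1,1)]) \<and>
     \<comment> \<open>(1)\<close>
     teq3 sc [(x, y, s). (r,s) \<leftarrow> R, (x,y) \<leftarrow> \<Delta> r]
             [(r, r', s * s'). (r,s) \<leftarrow> R, (r',s') \<leftarrow> R] \<and>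
     \<comment> \<open>(2)\<close>
     teq3 sc [(r, x, y). (r,s) \<leftarrow> R, (x,y) \<leftarrow> \<Delta> s]
             [(r * r', s', s). (r,s) \<leftarrow> R, (r',s') \<leftarrow> R] \<and>
     \<comment> \<open>(3)\<close>
     teq3 sc [(r, y * r', x * s'). (r,s) \<leftarrow> R, (x,y) \<leftarrow> \<Delta> s, (r',s') \<leftarrow> R]
             [(r, r' * x, s' * y). (r,s) \<leftarrow> R, (x,y) \<leftarrow> \<Delta> s, (r',s') \<leftarrow> R] \<and>
     \<comment> \<open>(4)\<close>
     teq3 sc [(y * r', x * s', s). (r,s) \<leftarrow> R, (x,y) \<leftarrow> \<Delta> r, (r',s') \<leftarrow> R]
             [(r' * x, s' * y, s). (r,s) \<leftarrow> R, (x,y) \<leftarrow> \<Delta> r, (r',s') \<leftarrow> R] \<and>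
     \<comment> \<open>(5): nu(h) lies in H (x) Z(H)\<close>
     (\<forall>h. \<exists>zs. (\<forall>(a,z) \<in> set zs. central z) \<and> teq2 sc (nu \<Delta> S R h) zs) \<and>
     \<comment> \<open>(6)\<close>
     (\<forall>h. teq2 sc (nu \<Delta> S R h)
             [(r * y * r', S s' * S x * s * z). (r,s) \<leftarrow> R, (x,y,z) \<leftarrow> Delta3 \<Delta> h, (r',s') \<leftarrow> R])"

definition drinfeld_u :: "('h \<Rightarrow> 'h) \<Rightarrow> 'h::{times,comm_monoid_add} tens2 \<Rightarrow> 'h" where
  "drinfeld_u S R = (\<Sum>(r,s)\<leftarrow>R. S s * r)"

definition T_map :: "('h \<Rightarrow> 'h tens2) \<Rightarrow> ('h \<Rightarrow> 'h) \<Rightarrow> 'h::{times,comm_monoid_add} tens2 \<Rightarrow> 'h \<Rightarrow> 'h" where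
  "T_map \<Delta> S R h = (\<Sum>(a,b)\<leftarrow>nu \<Delta> S R h. a * b)"

end

theory Submission
  imports Defs
begin

definition lin :: "('k::field \<Rightarrow> 'a::ab_group_add \<Rightarrow> 'a) \<Rightarrow> ('k \<Rightarrow> 'b::ab_group_add \<Rightarrow> 'b) \<Rightarrow> ('a \<Rightarrow> 'b) \<Rightarrow> bool" where
  "lin s1 s2 f \<longleftrightarrow> (\<forall>x y. f (x + y) = f x + f y) \<and> (\<forall>c x. f (s1 c x) = s2 c (f x))"

lemma vs_self: "vector_space ((*) :: 'k::field \<Rightarrow> 'k \<Rightarrow> 'k)"
  by unfold_locales (auto simp: algebra_simps)

lemma sum_list_map_sum_swap:
  "sum_list (map (\<lambda>x. \<Sum>e\<in>E. f x e) xs) = (\<Sum>e\<in>E. sum_list (map (\<lambda>x. f x e) xs))"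
  by (induction xs) (auto simp: sum.distrib)

lemma lin_zero: "lin s1 s2 f \<Longrightarrow> f 0 = 0"
  unfolding lin_def by (metis add_cancel_right_right add_0)

lemma lin_sum: "lin s1 s2 f \<Longrightarrow> f (sum g E) = (\<Sum>e\<in>E. f (g e))"
  by (induction E rule: infinite_finite_induct) (auto simp: lin_zero lin_def)

lemma lin_scale: "lin s1 s2 f \<Longrightarrow> f (s1 c x) = s2 c (f x)"
  unfolding lin_def by blast

lemma lin_add: "lin s1 s2 f \<Longrightarrow> f (x + y) = f x + f y"
  unfolding lin_def by blast

lemma lin_sum_list: "lin s1 s2 f \<Longrightarrow> f (sum_list (map g xs)) = sum_list (map (\<lambda>x. f (g x)) xs)"
  by (induction xs) (auto simp: lin_zero lin_def)

context vector_space_pair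
begin

lemma sum_list_scale_left:
  "sum_list (map (\<lambda>x. s2 (g x) v) xs) = s2 (sum_list (map g xs)) v"
  by (induction xs) (auto simp: vs2.scale_left_distrib)

lemma coord_setup:
  obtains c :: "'b \<Rightarrow> 'b \<Rightarrow> 'a" where "\<And>e. lin_fun s1 (c e)"
    "\<And>x. finite {e. c e x \<noteq> 0}"
    "\<And>x E. finite E \<Longrightarrow> {e. c e x \<noteq> 0} \<subseteq> E \<Longrightarrow> x = (\<Sum>e\<in>E. s1 (c e x) e)"
proof -
  obtain B where B: "vs1.independent B" "UNIV \<subseteq> vs1.span B"
    using vs1.basis_exists[of UNIV] by auto
  define c where "c e x = vs1.representation B x e" for e x
  have f1: "lin_fun s1 (c e)" for e
  proof -
    have sp: "x \<in> vs1.span B" for x using B by auto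
    show ?thesis
    unfolding lin_fun_def linear_iff c_def
    using B vs_self vs1.vector_space_axioms
    by (auto simp: vs1.representation_add[OF B(1) sp sp] vs1.representation_scale[OF B(1) sp])
  qed
  have f2: "finite {e. c e x \<noteq> 0}" for x
    unfolding c_def by (rule vs1.finite_representation)
  have f3: "x = (\<Sum>e\<in>E. s1 (c e x) e)" if "finite E" "{e. c e x \<noteq> 0} \<subseteq> E" for x E
  proof -
    have "(\<Sum>e\<in>E. s1 (c e x) e) = (\<Sum>e\<in>{e. c e x \<noteq> 0}. s1 (c e x) e)"
      by (rule sum.mono_neutral_right[OF that(1) that(2)]) simp
    also have "\<dots> = x" unfolding c_def
      by (rule vs1.sum_nonzero_representation_eq) (use B in auto)
    finally show ?thesis by simp
  qed
  show ?thesis by (rule that[OF f1 f2 f3])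
qed

lemma multilin2:
  fixes \<Phi> :: "'b \<Rightarrow> 'b \<Rightarrow> 'c"
  assumes eq: "teq2 s1 xs ys"
    and l1: "\<And>b. lin s1 s2 (\<lambda>a. \<Phi> a b)" and l2: "\<And>a. lin s1 s2 (\<Phi> a)"
  shows "sum_list (map (\<lambda>(a,b). \<Phi> a b) xs) = sum_list (map (\<lambda>(a,b). \<Phi> a b) ys)"
proof -
  obtain c :: "'b \<Rightarrow> 'b \<Rightarrow> 'a" where lc: "\<And>e. lin_fun s1 (c e)"
    and fc: "\<And>x. finite {e. c e x \<noteq> 0}"
    and ex: "\<And>x E. finite E \<Longrightarrow> {e. c e x \<noteq> 0} \<subseteq> E \<Longrightarrow> x = (\<Sum>e\<in>E. s1 (c e x) e)"
    by (rule coord_setup) fast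
  define X where "X = fst ` set (xs @ ys) \<union> snd ` set (xs @ ys)"
  define E where "E = (\<Union>x\<in>X. {e. c e x \<noteq> 0})"
  have fE: "finite E" unfolding E_def X_def using fc by auto
  have exE: "x = (\<Sum>e\<in>E. s1 (c e x) e)" if "x \<in> X" for x
    by (rule ex[OF fE]) (use that in \<open>auto simp: E_def\<close>)
  have key: "\<Phi> a b = (\<Sum>e\<in>E. \<Sum>e'\<in>E. s2 (c e a * c e' b) (\<Phi> e e'))"
    if "a \<in> X" "b \<in> X" for a b
  proof -
    have "\<Phi> a b = \<Phi> (\<Sum>e\<in>E. s1 (c e a) e) b" using exE[OF that(1)] by simp
    also have "\<dots> = (\<Sum>e\<in>E. s2 (c e a) (\<Phi> e b))"
      by (simp add: lin_sum[OF l1[of b]] lin_scale[OF l1[of b]])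
    also have "\<dots> = (\<Sum>e\<in>E. s2 (c e a) (\<Phi> e (\<Sum>e'\<in>E. s1 (c e' b) e')))"
      using exE[OF that(2)] by simp
    also have "\<dots> = (\<Sum>e\<in>E. \<Sum>e'\<in>E. s2 (c e a * c e' b) (\<Phi> e e'))"
      by (simp add: lin_sum[OF l2] lin_scale[OF l2] vs2.scale_sum_right)
    finally show ?thesis .
  qed
  have ev: "sum_list (map (\<lambda>(a,b). \<Phi> a b) zs) =
      (\<Sum>e\<in>E. \<Sum>e'\<in>E. s2 (sum_list (map (\<lambda>(a,b). c e a * c e' b) zs)) (\<Phi> e e'))"
    if "set zs \<subseteq> set (xs @ ys)" for zs
  proof -
    have "sum_list (map (\<lambda>(a,b). \<Phi> a b) zs) =
        sum_list (map (\<lambda>(a,b). \<Sum>e\<in>E. \<Sum>e'\<in>E. s2 (c e a * c e' b) (\<Phi> e e')) zs)"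
    proof (rule arg_cong[where f=sum_list], rule map_cong[OF refl], clarify)
      fix a b assume "(a,b) \<in> set zs"
      then have "(a,b) \<in> set (xs @ ys)" using that by blast
      then have "a \<in> X" "b \<in> X" unfolding X_def by (force, force)
      then show "\<Phi> a b = (\<Sum>e\<in>E. \<Sum>e'\<in>E. s2 (c e a * c e' b) (\<Phi> e e'))" by (rule key)
    qed
    also have "\<dots> = (\<Sum>e\<in>E. \<Sum>e'\<in>E. s2 (sum_list (map (\<lambda>(a,b). c e a * c e' b) zs)) (\<Phi> e e'))"
      by (simp add: case_prod_unfold sum_list_map_sum_swap sum_list_scale_left)
    finally show ?thesis .
  qed
  have "sum_list (map (\<lambda>(a,b). c e a * c e' b) xs) = sum_list (map (\<lambda>(a,b). c e a * c e' b) ys)" for e e'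
    using eq[unfolded teq2_def, rule_format, OF conjI[OF lc lc]] .
  then show ?thesis using ev[of xs] ev[of ys] by simp
qed

lemma multilin3:
  fixes \<Phi> :: "'b \<Rightarrow> 'b \<Rightarrow> 'b \<Rightarrow> 'c"
  assumes eq: "teq3 s1 xs ys"
    and l1: "\<And>b d. lin s1 s2 (\<lambda>a. \<Phi> a b d)" and l2: "\<And>a d. lin s1 s2 (\<lambda>b. \<Phi> a b d)"
    and l3: "\<And>a b. lin s1 s2 (\<Phi> a b)"
  shows "sum_list (map (\<lambda>(a,b,d). \<Phi> a b d) xs) = sum_list (map (\<lambda>(a,b,d). \<Phi> a b d) ys)"
proof -
  obtain c :: "'b \<Rightarrow> 'b \<Rightarrow> 'a" where lc: "\<And>e. lin_fun s1 (c e)"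
    and fc: "\<And>x. finite {e. c e x \<noteq> 0}"
    and ex: "\<And>x E. finite E \<Longrightarrow> {e. c e x \<noteq> 0} \<subseteq> E \<Longrightarrow> x = (\<Sum>e\<in>E. s1 (c e x) e)"
    by (rule coord_setup) fast
  define X where "X = fst ` set (xs @ ys) \<union> fst ` snd ` set (xs @ ys) \<union> snd ` snd ` set (xs @ ys)"
  define E where "E = (\<Union>x\<in>X. {e. c e x \<noteq> 0})"
  have fE: "finite E" unfolding E_def X_def using fc by auto
  have exE: "x = (\<Sum>e\<in>E. s1 (c e x) e)" if "x \<in> X" for x
    by (rule ex[OF fE]) (use that in \<open>auto simp: E_def\<close>)
  have key: "\<Phi> a b d = (\<Sum>e\<in>E. \<Sum>e'\<in>E. \<Sum>e''\<in>E. s2 (c e a * c e' b * c e'' d) (\<Phi> e e' e''))"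
    if "a \<in> X" "b \<in> X" "d \<in> X" for a b d
  proof -
    have "\<Phi> a b d = \<Phi> (\<Sum>e\<in>E. s1 (c e a) e) b d" using exE[OF that(1)] by simp
    also have "\<dots> = (\<Sum>e\<in>E. s2 (c e a) (\<Phi> e b d))"
      by (simp add: lin_sum[OF l1[of b d]] lin_scale[OF l1[of b d]])
    also have "\<dots> = (\<Sum>e\<in>E. s2 (c e a) (\<Phi> e (\<Sum>e'\<in>E. s1 (c e' b) e') d))"
      using exE[OF that(2)] by simp
    also have "\<dots> = (\<Sum>e\<in>E. \<Sum>e'\<in>E. s2 (c e a * c e' b) (\<Phi> e e' d))"
      by (simp add: lin_sum[OF l2] lin_scale[OF l2] vs2.scale_sum_right)
    also have "\<dots> = (\<Sum>e\<in>E. \<Sum>e'\<in>E. s2 (c e a * c e' b) (\<Phi> e e' (\<Sum>e''\<in>E. s1 (c e'' d) e'')))"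
      using exE[OF that(3)] by simp
    also have "\<dots> = (\<Sum>e\<in>E. \<Sum>e'\<in>E. \<Sum>e''\<in>E. s2 (c e a * c e' b * c e'' d) (\<Phi> e e' e''))"
      by (simp add: lin_sum[OF l3] lin_scale[OF l3] vs2.scale_sum_right)
    finally show ?thesis .
  qed
  have ev: "sum_list (map (\<lambda>(a,b,d). \<Phi> a b d) zs) =
      (\<Sum>e\<in>E. \<Sum>e'\<in>E. \<Sum>e''\<in>E. s2 (sum_list (map (\<lambda>(a,b,d). c e a * c e' b * c e'' d) zs)) (\<Phi> e e' e''))"
    if "set zs \<subseteq> set (xs @ ys)" for zs
  proof -
    have "sum_list (map (\<lambda>(a,b,d). \<Phi> a b d) zs) =
        sum_list (map (\<lambda>(a,b,d). \<Sum>e\<in>E. \<Sum>e'\<in>E. \<Sum>e''\<in>E. s2 (c e a * c e' b * c e'' d) (\<Phi> e e' e'')) zs)"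
    proof (rule arg_cong[where f=sum_list], rule map_cong[OF refl], clarify)
      fix a b d assume "(a,b,d) \<in> set zs"
      then have "(a,b,d) \<in> set (xs @ ys)" using that by blast
      then have "a \<in> X" "b \<in> X" "d \<in> X" unfolding X_def by (force, force, force)
      then show "\<Phi> a b d = (\<Sum>e\<in>E. \<Sum>e'\<in>E. \<Sum>e''\<in>E. s2 (c e a * c e' b * c e'' d) (\<Phi> e e' e''))" by (rule key)
    qed
    also have "\<dots> = (\<Sum>e\<in>E. \<Sum>e'\<in>E. \<Sum>e''\<in>E. s2 (sum_list (map (\<lambda>(a,b,d). c e a * c e' b * c e'' d) zs)) (\<Phi> e e' e''))"
      by (simp add: case_prod_unfold sum_list_map_sum_swap sum_list_scale_left)
    finally show ?thesis .
  qed
  have "sum_list (map (\<lambda>(a,b,d). c e a * c e' b * c e'' d) xs) = sum_list (map (\<lambda>(a,b,d). c e a * c e' b * c e'' d) ys)" for e e' e''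
    using eq[unfolded teq3_def, rule_format, OF conjI[OF lc conjI[OF lc lc]]] .
  then show ?thesis using ev[of xs] ev[of ys] by simp
qed

end

definition LS :: "('a \<times> 'a) list \<Rightarrow> ('a \<Rightarrow> 'a \<Rightarrow> 'b::comm_monoid_add) \<Rightarrow> 'b" where
  "LS xs f = sum_list (map (\<lambda>(a,b). f a b) xs)"

lemma sl_concat: "sum_list (map f (concat xss)) = sum_list (map (\<lambda>xs. sum_list (map f xs)) xss)"
  by (induction xss) auto

lemma LS_Nil[simp]: "LS [] f = 0" and LS_Cons[simp]: "LS ((a,b)#xs) f = f a b + LS xs f"
  by (auto simp: LS_def)

lemma LS_append[simp]: "LS (xs @ ys) f = LS xs f + LS ys f"
  by (auto simp: LS_def)

lemma LS_0: "LS xs (\<lambda>a b. 0) = 0"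
  by (induction xs) auto

lemma LS_map_fst: "LS (map (\<lambda>(a,b). (g a, b)) xs) F = LS xs (\<lambda>a b. F (g a) b)"
  by (induction xs) auto

lemma LS_swap: "LS xs (\<lambda>a b. LS ys (\<lambda>c d. f a b c d)) = LS ys (\<lambda>c d. LS xs (\<lambda>a b. f a b c d))"
proof (induction xs)
  case (Cons x xs) then show ?case
    by (cases x) (simp add: LS_def case_prod_unfold sum_list_addf)
qed (simp add: LS_0)

lemma LS_add: "LS xs (\<lambda>a b. f a b + g a b) = LS xs f + LS xs g"
  by (induction xs) (auto simp: algebra_simps)

lemma LS_mult_left: "(c::'a::semiring_0) * LS xs f = LS xs (\<lambda>a b. c * f a b)"
  by (induction xs) (auto simp: algebra_simps)

lemma LS_mult_right: "LS xs f * (c::'a::semiring_0) = LS xs (\<lambda>a b. f a b * c)"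
  by (induction xs) (auto simp: algebra_simps)

lemma LS_cong: "(\<And>a b. (a,b) \<in> set xs \<Longrightarrow> f a b = g a b) \<Longrightarrow> LS xs f = LS xs g"
  by (induction xs) auto

lemma lin_LS: "lin s1 s2 F \<Longrightarrow> F (LS xs f) = LS xs (\<lambda>a b. F (f a b))"
  by (induction xs) (auto simp: lin_add lin_zero)


definition bil :: "('k::field \<Rightarrow> 'a::ab_group_add \<Rightarrow> 'a) \<Rightarrow> ('a \<Rightarrow> 'a \<Rightarrow> 'a) \<Rightarrow> bool" where
  "bil s F \<longleftrightarrow> (\<forall>b. lin s s (\<lambda>a. F a b)) \<and> (\<forall>a. lin s s (F a))"

definition tri :: "('k::field \<Rightarrow> 'a::ab_group_add \<Rightarrow> 'a) \<Rightarrow> ('a \<Rightarrow> 'a \<Rightarrow> 'a \<Rightarrow> 'a) \<Rightarrow> bool" where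
  "tri s F \<longleftrightarrow> (\<forall>b d. lin s s (\<lambda>a. F a b d)) \<and> (\<forall>a d. lin s s (\<lambda>b. F a b d)) \<and> (\<forall>a b. lin s s (F a b))"

locale sqt =
  fixes sc :: "'k::field \<Rightarrow> 'h::ring_1 \<Rightarrow> 'h"
    and \<Delta> :: "'h \<Rightarrow> ('h \<times> 'h) list" and \<epsilon> :: "'h \<Rightarrow> 'k" and S :: "'h \<Rightarrow> 'h"
    and R :: "('h \<times> 'h) list"
  assumes sq: "semiquasitriangular sc \<Delta> \<epsilon> S R"
begin

lemma hopf: "hopf_algebra sc \<Delta> \<epsilon> S" using sq unfolding semiquasitriangular_def by blast

lemma vs: "vector_space sc" using hopf unfolding hopf_algebra_def by blast

sublocale vsp: vector_space_pair sc sc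
  by (simp add: vector_space_pair_def vs)

lemma sc_mult_left[simp]: "sc c a * b = sc c (a * b)"
  and sc_mult_right[simp]: "a * sc c b = sc c (a * b)"
  using hopf unfolding hopf_algebra_def by metis+

lemma Delta_add: "teq2 sc (\<Delta> (a + b)) (\<Delta> a @ \<Delta> b)"
  and Delta_sc: "teq2 sc (\<Delta> (sc c a)) [(sc c x, y). (x,y) \<leftarrow> \<Delta> a]"
  and coas_raw: "teq3 sc (Delta3 \<Delta> h) [(a, x, y). (a,b) \<leftarrow> \<Delta> h, (x,y) \<leftarrow> \<Delta> b]"
  and eps_lin: "lin_fun sc \<epsilon>"
  and counit1: "(\<Sum>(a,b)\<leftarrow>\<Delta> h. sc (\<epsilon> a) b) = h"
  and counit2: "(\<Sum>(a,b)\<leftarrow>\<Delta> h. sc (\<epsilon> b) a) = h"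
  and Delta_mult: "teq2 sc (\<Delta> (a * b)) (tmul2 (\<Delta> a) (\<Delta> b))"
  and Delta_one: "teq2 sc (\<Delta> 1) [(1, 1)]"
  and eps_mult: "\<epsilon> (a * b) = \<epsilon> a * \<epsilon> b"
  and eps_one: "\<epsilon> 1 = 1"
  and S_lin_raw: "Vector_Spaces.linear sc sc S"
  and antip1: "(\<Sum>(a,b)\<leftarrow>\<Delta> h. S a * b) = sc (\<epsilon> h) 1"
  and antip2: "(\<Sum>(a,b)\<leftarrow>\<Delta> h. a * S b) = sc (\<epsilon> h) 1"
  and S_bij: "bij S"
  using hopf unfolding hopf_algebra_def by blast+

lemma S_lin: "lin sc sc S"
  using S_lin_raw unfolding linear_iff lin_def by blast

lemma eps_linear: "lin sc (*) \<epsilon>"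
  using eps_lin unfolding lin_fun_def linear_iff lin_def by blast

lemma eps_add: "\<epsilon> (a + b) = \<epsilon> a + \<epsilon> b" and eps_sc: "\<epsilon> (sc c a) = c * \<epsilon> a"
  using eps_linear unfolding lin_def by blast+

lemma S_add: "S (a + b) = S a + S b" and S_sc: "S (sc c a) = sc c (S a)"
  using S_lin unfolding lin_def by blast+

lemma S_zero[simp]: "S 0 = 0" using lin_zero[OF S_lin] .
lemma eps_zero[simp]: "\<epsilon> 0 = 0" using lin_zero[OF eps_linear] .

lemma LS_sc: "sc c (LS xs f) = LS xs (\<lambda>a b. sc c (f a b))"
  by (induction xs) (auto simp: vsp.vs1.scale_right_distrib)

lemma LS_sc_left: "LS xs (\<lambda>a b. sc (g a b) v) = sc (LS xs g) v"
  by (induction xs) (auto simp: vsp.vs1.scale_left_distrib)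

lemma LS_S: "S (LS xs f) = LS xs (\<lambda>a b. S (f a b))"
  by (rule lin_LS[OF S_lin])

lemma LS_eps: "\<epsilon> (LS xs f) = LS xs (\<lambda>a b. \<epsilon> (f a b))"
  by (rule lin_LS[OF eps_linear])

abbreviation L where "L f \<equiv> lin sc sc f"

lemma L_id: "L (\<lambda>x. x)" by (simp add: lin_def)
lemma L_mult_l: "L f \<Longrightarrow> L (\<lambda>x. f x * c)"
  by (simp add: lin_def distrib_right)
lemma L_mult_r: "L f \<Longrightarrow> L (\<lambda>x. c * f x)"
  by (simp add: lin_def distrib_left)
lemma L_S: "L f \<Longrightarrow> L (\<lambda>x. S (f x))"
  by (simp add: lin_def S_add S_sc)
lemma L_sc: "L f \<Longrightarrow> L (\<lambda>x. sc k (f x))"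
  by (simp add: lin_def vsp.vs1.scale_right_distrib mult.commute)
lemma L_eps: "L f \<Longrightarrow> L (\<lambda>x. sc (\<epsilon> (f x)) c)"
  by (simp add: lin_def eps_add eps_sc vsp.vs1.scale_left_distrib)
lemma L_add: "L f \<Longrightarrow> L g \<Longrightarrow> L (\<lambda>x. f x + g x)"
  by (simp add: lin_def vsp.vs1.scale_right_distrib algebra_simps)
lemma L_LS: "(\<And>a b. L (\<lambda>x. F a b x)) \<Longrightarrow> L (\<lambda>x. LS xs (\<lambda>a b. F a b x))"
  unfolding lin_def by (auto simp: LS_add LS_sc)

lemma tq2: "teq2 sc xs ys \<Longrightarrow> bil sc F \<Longrightarrow> LS xs F = LS ys F"
  unfolding LS_def bil_def using vsp.multilin2 by blast

lemma tq3: "teq3 sc xs ys \<Longrightarrow> tri sc F \<Longrightarrow>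
   sum_list (map (\<lambda>(a,b,d). F a b d) xs) = sum_list (map (\<lambda>(a,b,d). F a b d) ys)"
  unfolding tri_def using vsp.multilin3 by blast

lemma L_Delta: "(\<And>b. L (\<lambda>a. F a b)) \<Longrightarrow> (\<And>a. L (\<lambda>b. F a b)) \<Longrightarrow> L f \<Longrightarrow> L (\<lambda>x. LS (\<Delta> (f x)) F)"
proof -
  assume l1: "\<And>b. L (\<lambda>a. F a b)" and l2: "\<And>a. L (\<lambda>b. F a b)" and lf: "L f"
  have bF: "bil sc F" using l1 l2 unfolding bil_def by auto
  show ?thesis unfolding lin_def
  proof (intro conjI allI)
    fix x y
    have "LS (\<Delta> (f (x + y))) F = LS (\<Delta> (f x) @ \<Delta> (f y)) F"
      using tq2[OF Delta_add bF] lf by (simp add: lin_add)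
    then show "LS (\<Delta> (f (x + y))) F = LS (\<Delta> (f x)) F + LS (\<Delta> (f y)) F" by simp
  next
    fix c x
    have "LS (\<Delta> (f (sc c x))) F = LS [(sc c a, b). (a,b) \<leftarrow> \<Delta> (f x)] F"
      using tq2[OF Delta_sc bF] lf by (simp add: lin_scale)
    also have "\<dots> = LS (\<Delta> (f x)) (\<lambda>a b. F (sc c a) b)"
      by (simp add: LS_map_fst)
    also have "\<dots> = sc c (LS (\<Delta> (f x)) F)"
      by (simp add: LS_sc lin_scale[OF l1])
    finally show "LS (\<Delta> (f (sc c x))) F = sc c (LS (\<Delta> (f x)) F)" .
  qed
qed

lemmas L_intros = L_id L_mult_l L_mult_r L_S L_sc L_eps L_add L_LS L_Delta

end

context sqt
begin

lemma Rinv_ex: "\<exists>Ri. teq2 sc (tmul2 R Ri) [(1,1)] \<and> teq2 sc (tmul2 Ri R) [(1,1)]"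
  and ax1_raw: "teq3 sc [(x, y, s). (r,s) \<leftarrow> R, (x,y) \<leftarrow> \<Delta> r]
             [(r, r', s * s'). (r,s) \<leftarrow> R, (r',s') \<leftarrow> R]"
  and ax2_raw: "teq3 sc [(r, x, y). (r,s) \<leftarrow> R, (x,y) \<leftarrow> \<Delta> s]
             [(r * r', s', s). (r,s) \<leftarrow> R, (r',s') \<leftarrow> R]"
  and ax4_raw: "teq3 sc [(y * r', x * s', s). (r,s) \<leftarrow> R, (x,y) \<leftarrow> \<Delta> r, (r',s') \<leftarrow> R]
             [(r' * x, s' * y, s). (r,s) \<leftarrow> R, (x,y) \<leftarrow> \<Delta> r, (r',s') \<leftarrow> R]"
  and ax5_raw: "\<forall>h. \<exists>zs. (\<forall>(a,z) \<in> set zs. central z) \<and> teq2 sc (nu \<Delta> S R h) zs"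
  and ax6_raw: "\<forall>h. teq2 sc (nu \<Delta> S R h)
             [(r * y * r', S s' * S x * s * z). (r,s) \<leftarrow> R, (x,y,z) \<leftarrow> Delta3 \<Delta> h, (r',s') \<leftarrow> R]"
  using sq unfolding semiquasitriangular_def by blast+

lemma counit1': "LS (\<Delta> h) (\<lambda>a b. sc (\<epsilon> a) b) = h" using counit1 by (simp add: LS_def)
lemma counit2': "LS (\<Delta> h) (\<lambda>a b. sc (\<epsilon> b) a) = h" using counit2 by (simp add: LS_def)
lemma antip1': "LS (\<Delta> h) (\<lambda>a b. S a * b) = sc (\<epsilon> h) 1" using antip1 by (simp add: LS_def)
lemma antip2': "LS (\<Delta> h) (\<lambda>a b. a * S b) = sc (\<epsilon> h) 1" using antip2 by (simp add: LS_def)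

lemma coassoc: "tri sc \<Phi> \<Longrightarrow>
  LS (\<Delta> h) (\<lambda>a b. LS (\<Delta> a) (\<lambda>x y. \<Phi> x y b)) = LS (\<Delta> h) (\<lambda>a b. LS (\<Delta> b) (\<lambda>x y. \<Phi> a x y))"
  using tq3[OF coas_raw, of \<Phi> h] by (simp add: Delta3_def LS_def sl_concat case_prod_unfold o_def map_map)

lemma Dmult: "bil sc \<Phi> \<Longrightarrow>
  LS (\<Delta> (a * b)) \<Phi> = LS (\<Delta> a) (\<lambda>x y. LS (\<Delta> b) (\<lambda>x' y'. \<Phi> (x * x') (y * y')))"
  using tq2[OF Delta_mult, of \<Phi> a b] by (simp add: tmul2_def LS_def sl_concat case_prod_unfold o_def map_map)

lemma Done: "bil sc \<Phi> \<Longrightarrow> LS (\<Delta> 1) \<Phi> = \<Phi> 1 1"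
  using tq2[OF Delta_one, of \<Phi>] by simp

lemma ax1: "tri sc \<Phi> \<Longrightarrow>
  LS R (\<lambda>r s. LS (\<Delta> r) (\<lambda>x y. \<Phi> x y s)) = LS R (\<lambda>r s. LS R (\<lambda>r' s'. \<Phi> r r' (s * s')))"
  using tq3[OF ax1_raw, of \<Phi>] by (simp add: LS_def sl_concat case_prod_unfold o_def map_map)

lemma ax2: "tri sc \<Phi> \<Longrightarrow>
  LS R (\<lambda>r s. LS (\<Delta> s) (\<lambda>x y. \<Phi> r x y)) = LS R (\<lambda>r s. LS R (\<lambda>r' s'. \<Phi> (r * r') s' s))"
  using tq3[OF ax2_raw, of \<Phi>] by (simp add: LS_def sl_concat case_prod_unfold o_def map_map)

lemma ax4: "tri sc \<Phi> \<Longrightarrow>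
  LS R (\<lambda>r s. LS (\<Delta> r) (\<lambda>x y. LS R (\<lambda>r' s'. \<Phi> (y * r') (x * s') s))) =
  LS R (\<lambda>r s. LS (\<Delta> r) (\<lambda>x y. LS R (\<lambda>r' s'. \<Phi> (r' * x) (s' * y) s)))"
  using tq3[OF ax4_raw, of \<Phi>] by (simp add: LS_def sl_concat case_prod_unfold o_def map_map)

lemma nu_LS: "LS (nu \<Delta> S R h) \<Phi> =
  LS R (\<lambda>r s. LS (\<Delta> h) (\<lambda>a z. LS (\<Delta> a) (\<lambda>x y. LS R (\<lambda>r' s'. \<Phi> (s * y * s') (S x * S r * z * r')))))"
  by (simp add: nu_def Delta3_def LS_def sl_concat case_prod_unfold o_def map_map)

lemma nu6: "bil sc \<Phi> \<Longrightarrow> LS (nu \<Delta> S R h) \<Phi> =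
  LS R (\<lambda>r s. LS (\<Delta> h) (\<lambda>a z. LS (\<Delta> a) (\<lambda>x y. LS R (\<lambda>r' s'. \<Phi> (r * y * r') (S s' * S x * s * z)))))"
  using tq2[OF ax6_raw[rule_format, of h], of \<Phi>] by (simp add: Delta3_def LS_def sl_concat case_prod_unfold o_def map_map)

lemma nu_central: "bil sc G \<Longrightarrow> bil sc G' \<Longrightarrow> (\<And>a z. central z \<Longrightarrow> G a z = G' a z) \<Longrightarrow>
  LS (nu \<Delta> S R h) G = LS (nu \<Delta> S R h) G'"
proof -
  assume bG: "bil sc G" and bG': "bil sc G'" and eq: "\<And>a z. central z \<Longrightarrow> G a z = G' a z"
  obtain zs where zs: "\<forall>(a,z) \<in> set zs. central z" "teq2 sc (nu \<Delta> S R h) zs"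
    using ax5_raw by blast
  have "LS (nu \<Delta> S R h) G = LS zs G" by (rule tq2[OF zs(2) bG])
  also have "\<dots> = LS zs G'" by (rule LS_cong) (use zs(1) eq in auto)
  also have "\<dots> = LS (nu \<Delta> S R h) G'" by (rule tq2[OF zs(2) bG', symmetric])
  finally show ?thesis .
qed

end

context sqt
begin

lemma bilI: "(\<And>b. L (\<lambda>a. F a b)) \<Longrightarrow> (\<And>a. L (\<lambda>b. F a b)) \<Longrightarrow> bil sc F"
  unfolding bil_def by auto

lemma triI: "(\<And>b d. L (\<lambda>a. F a b d)) \<Longrightarrow> (\<And>a d. L (\<lambda>b. F a b d)) \<Longrightarrow> (\<And>a b. L (\<lambda>d. F a b d)) \<Longrightarrow> tri sc F"
  unfolding tri_def by auto

lemma S_one[simp]: "S 1 = 1"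
proof -
  have "LS (\<Delta> 1) (\<lambda>x y. S x * y) = S 1 * 1"
    by (rule Done) (intro bilI L_intros)
  then show ?thesis using antip1'[of 1] by (simp add: eps_one)
qed

lemma eps_Delta: "LS (\<Delta> h) (\<lambda>x y. \<epsilon> x * \<epsilon> y) = \<epsilon> h"
proof -
  have "\<epsilon> h = \<epsilon> (LS (\<Delta> h) (\<lambda>a b. sc (\<epsilon> a) b))" by (simp add: counit1')
  also have "\<dots> = LS (\<Delta> h) (\<lambda>x y. \<epsilon> x * \<epsilon> y)" by (simp add: LS_eps eps_sc)
  finally show ?thesis by simp
qed

lemma S_antihom: "S (a * b) = S b * S a"
proof -
  have m2: "LS (\<Delta> y) (\<lambda>p q. LS (\<Delta> y') (\<lambda>p' q'. p * p' * S q' * S q)) = sc (\<epsilon> y * \<epsilon> y') 1" for y y'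
  proof -
    have "LS (\<Delta> y) (\<lambda>p q. LS (\<Delta> y') (\<lambda>p' q'. p * p' * S q' * S q))
        = LS (\<Delta> y) (\<lambda>p q. p * LS (\<Delta> y') (\<lambda>p' q'. p' * S q') * S q)"
      by (simp add: LS_mult_left LS_mult_right mult.assoc)
    also have "\<dots> = sc (\<epsilon> y * \<epsilon> y') 1"
      by (simp add: antip2' LS_sc[symmetric] mult.commute)
    finally show ?thesis .
  qed
  have "S (a * b) = S (LS (\<Delta> a) (\<lambda>x y. sc (\<epsilon> y) x) * LS (\<Delta> b) (\<lambda>x' y'. sc (\<epsilon> y') x'))"
    by (simp add: counit2')
  also have "\<dots> = LS (\<Delta> a) (\<lambda>x y. LS (\<Delta> b) (\<lambda>x' y'. S (x * x') * sc (\<epsilon> y * \<epsilon> y') 1))"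
    by (subst LS_mult_right, simp only: LS_mult_left, simp add: LS_S S_sc mult.commute)
  also have "\<dots> = LS (\<Delta> a) (\<lambda>x y. LS (\<Delta> b) (\<lambda>x' y'. LS (\<Delta> y) (\<lambda>p q. LS (\<Delta> y') (\<lambda>p' q'.
        S (x * x') * (p * p' * S q' * S q)))))"
    by (simp add: m2[symmetric] LS_mult_left)
  also have "\<dots> = LS (\<Delta> a) (\<lambda>x y. LS (\<Delta> y) (\<lambda>p q. LS (\<Delta> b) (\<lambda>x' y'. LS (\<Delta> y') (\<lambda>p' q'.
        S (x * x') * (p * p' * S q' * S q)))))"
    by (subst LS_swap, rule refl)
  also have "\<dots> = LS (\<Delta> a) (\<lambda>x y. LS (\<Delta> x) (\<lambda>p q. LS (\<Delta> b) (\<lambda>x' y'. LS (\<Delta> y') (\<lambda>p' q'.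
        S (p * x') * (q * p' * S q' * S y)))))"
    by (rule coassoc[symmetric]) (intro triI L_intros)
  also have "\<dots> = LS (\<Delta> a) (\<lambda>x y. LS (\<Delta> x) (\<lambda>p q. LS (\<Delta> b) (\<lambda>x' y'. LS (\<Delta> x') (\<lambda>p' q'.
        S (p * p') * (q * q' * S y' * S y)))))"
  proof -
    have "LS (\<Delta> b) (\<lambda>x' y'. LS (\<Delta> y') (\<lambda>p' q'. S (p * x') * (q * p' * S q' * S y))) =
          LS (\<Delta> b) (\<lambda>x' y'. LS (\<Delta> x') (\<lambda>p' q'. S (p * p') * (q * q' * S y' * S y)))" for p q y
      by (rule coassoc[symmetric]) (intro triI L_intros)
    then show ?thesis by simp
  qed
  also have "\<dots> = LS (\<Delta> a) (\<lambda>x y. LS (\<Delta> b) (\<lambda>x' y'. LS (\<Delta> x) (\<lambda>p q. LS (\<Delta> x') (\<lambda>p' q'.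
        S (p * p') * (q * q') * (S y' * S y)))))"
    by (subst LS_swap) (simp add: mult.assoc)
  also have "\<dots> = LS (\<Delta> a) (\<lambda>x y. LS (\<Delta> b) (\<lambda>x' y'. sc (\<epsilon> x * \<epsilon> x') (S y' * S y)))"
  proof -
    have "LS (\<Delta> x) (\<lambda>p q. LS (\<Delta> x') (\<lambda>p' q'. S (p * p') * (q * q') * (S y' * S y)))
       = LS (\<Delta> (x * x')) (\<lambda>m n. S m * n) * (S y' * S y)" for x x' y y'
      by (subst Dmult) (intro bilI L_intros, simp add: LS_mult_right)
    then show ?thesis by (simp add: antip1' eps_mult)
  qed
  also have "\<dots> = LS (\<Delta> b) (\<lambda>x' y'. sc (\<epsilon> x') (S y')) * LS (\<Delta> a) (\<lambda>x y. sc (\<epsilon> x) (S y))"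
  proof -
    have "LS (\<Delta> a) (\<lambda>x y. LS (\<Delta> b) (\<lambda>x' y'. sc (\<epsilon> x * \<epsilon> x') (S y' * S y))) =
      LS (\<Delta> b) (\<lambda>x' y'. LS (\<Delta> a) (\<lambda>x y. sc (\<epsilon> x') (S y') * sc (\<epsilon> x) (S y)))"
      by (subst LS_swap) (simp add: mult.commute)
    also have "\<dots> = LS (\<Delta> b) (\<lambda>x' y'. sc (\<epsilon> x') (S y')) * LS (\<Delta> a) (\<lambda>x y. sc (\<epsilon> x) (S y))"
      by (subst LS_mult_right, simp only: LS_mult_left)
    finally show ?thesis .
  qed
  also have "\<dots> = S b * S a"
    by (simp add: LS_S[symmetric] S_sc[symmetric] counit1')
  finally show ?thesis .
qed

end

context sqt
begin

lemma Rinv: obtains Ri where "\<And>\<Phi>. bil sc \<Phi> \<Longrightarrow> LS R (\<lambda>r s. LS Ri (\<lambda>a b. \<Phi> (r * a) (s * b))) = \<Phi> 1 1"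
proof -
  obtain Ri where Ri: "teq2 sc (tmul2 R Ri) [(1,1)]" using Rinv_ex by blast
  have "LS R (\<lambda>r s. LS Ri (\<lambda>a b. \<Phi> (r * a) (s * b))) = \<Phi> 1 1" if "bil sc \<Phi>" for \<Phi>
    using tq2[OF Ri that] by (simp add: tmul2_def LS_def sl_concat case_prod_unfold o_def map_map)
  then show ?thesis using that by blast
qed

lemma R_eps1: "LS R (\<lambda>r s. sc (\<epsilon> r) s) = 1"
proof -
  define c where "c = LS R (\<lambda>r s. sc (\<epsilon> r) s)"
  obtain Ri where Ri: "\<And>\<Phi>. bil sc \<Phi> \<Longrightarrow> LS R (\<lambda>r s. LS Ri (\<lambda>a b. \<Phi> (r * a) (s * b))) = \<Phi> 1 1"
    using Rinv by blast
  define d where "d = LS Ri (\<lambda>r s. sc (\<epsilon> r) s)"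
  have "LS R (\<lambda>r s. LS (\<Delta> r) (\<lambda>x y. sc (\<epsilon> x) (sc (\<epsilon> y) s))) =
        LS R (\<lambda>r s. LS R (\<lambda>r' s'. sc (\<epsilon> r) (sc (\<epsilon> r') (s * s'))))"
    by (rule ax1) (intro triI L_intros)
  moreover have "LS R (\<lambda>r s. LS (\<Delta> r) (\<lambda>x y. sc (\<epsilon> x) (sc (\<epsilon> y) s))) = c"
    by (simp add: LS_sc_left eps_Delta c_def)
  moreover have "c * c = LS R (\<lambda>r s. LS R (\<lambda>r' s'. sc (\<epsilon> r) (sc (\<epsilon> r') (s * s'))))"
    unfolding c_def by (subst LS_mult_right, simp only: LS_mult_left, simp add: mult.commute)
  ultimately have cc: "c * c = c" by simp
  have "LS R (\<lambda>r s. LS Ri (\<lambda>a b. sc (\<epsilon> (r * a)) (s * b))) = sc (\<epsilon> 1) 1"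
    by (rule Ri) (intro bilI L_intros)
  moreover have "c * d = LS R (\<lambda>r s. LS Ri (\<lambda>a b. sc (\<epsilon> (r * a)) (s * b)))"
    unfolding c_def d_def by (subst LS_mult_right, simp only: LS_mult_left, simp add: eps_mult mult.commute)
  ultimately have cd: "c * d = 1" by (simp add: eps_one)
  have "c = c * (c * d)" using cd by simp
  also have "\<dots> = 1" by (metis cc cd mult.assoc)
  finally show ?thesis unfolding c_def .
qed

lemma R_eps2: "LS R (\<lambda>r s. sc (\<epsilon> s) r) = 1"
proof -
  define c where "c = LS R (\<lambda>r s. sc (\<epsilon> s) r)"
  obtain Ri where Ri: "\<And>\<Phi>. bil sc \<Phi> \<Longrightarrow> LS R (\<lambda>r s. LS Ri (\<lambda>a b. \<Phi> (r * a) (s * b))) = \<Phi> 1 1"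
    using Rinv by blast
  define d where "d = LS Ri (\<lambda>r s. sc (\<epsilon> s) r)"
  have "LS R (\<lambda>r s. LS (\<Delta> s) (\<lambda>x y. sc (\<epsilon> x) (sc (\<epsilon> y) r))) =
        LS R (\<lambda>r s. LS R (\<lambda>r' s'. sc (\<epsilon> s') (sc (\<epsilon> s) (r * r'))))"
    by (rule ax2) (intro triI L_intros)
  moreover have "LS R (\<lambda>r s. LS (\<Delta> s) (\<lambda>x y. sc (\<epsilon> x) (sc (\<epsilon> y) r))) = c"
    by (simp add: LS_sc_left eps_Delta c_def)
  moreover have "c * c = LS R (\<lambda>r s. LS R (\<lambda>r' s'. sc (\<epsilon> s') (sc (\<epsilon> s) (r * r'))))"
    unfolding c_def by (subst LS_mult_right, simp only: LS_mult_left, simp add: mult.commute)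
  ultimately have cc: "c * c = c" by simp
  have "LS R (\<lambda>r s. LS Ri (\<lambda>a b. sc (\<epsilon> (s * b)) (r * a))) = sc (\<epsilon> 1) 1"
    by (rule Ri[of "\<lambda>x y. sc (\<epsilon> y) x"]) (intro bilI L_intros)
  moreover have "c * d = LS R (\<lambda>r s. LS Ri (\<lambda>a b. sc (\<epsilon> (s * b)) (r * a)))"
    unfolding c_def d_def by (subst LS_mult_right, simp only: LS_mult_left, simp add: eps_mult mult.commute)
  ultimately have cd: "c * d = 1" by (simp add: eps_one)
  have "c = c * (c * d)" using cd by simp
  also have "\<dots> = 1" by (metis cc cd mult.assoc)
  finally show ?thesis unfolding c_def .
qed

definition u where "u = LS R (\<lambda>r s. S s * r)"

lemma sur: "LS R (\<lambda>r s. s * u * r) = 1"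
proof -
  have "LS R (\<lambda>r s. LS (\<Delta> s) (\<lambda>x y. x * S y * r)) = LS R (\<lambda>r s. LS R (\<lambda>r' s'. s' * S s * (r * r')))"
    by (rule ax2) (intro triI L_intros)
  moreover have "LS R (\<lambda>r s. LS (\<Delta> s) (\<lambda>x y. x * S y * r)) = 1"
    by (simp add: LS_mult_right[symmetric] antip2' R_eps2)
  moreover have "LS R (\<lambda>r s. s * u * r) = LS R (\<lambda>r s. LS R (\<lambda>r' s'. s' * S s * (r * r')))"
  proof -
    have "LS R (\<lambda>r s. s * u * r) = LS R (\<lambda>r s. LS R (\<lambda>r' s'. s * (S s' * r') * r))"
      unfolding u_def by (simp add: LS_mult_left LS_mult_right)
    also have "\<dots> = LS R (\<lambda>r s. LS R (\<lambda>r' s'. s' * S s * (r * r')))"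
      by (subst LS_swap) (simp add: mult.assoc)
    finally show ?thesis .
  qed
  ultimately show ?thesis by simp
qed

end

context sqt
begin

definition v where "v = LS R (\<lambda>r s. s * S (S r))"

lemma SS_eps: "LS (\<Delta> w) (\<lambda>p q. S (S q) * S p) = sc (\<epsilon> w) 1"
proof -
  have "LS (\<Delta> w) (\<lambda>p q. S (S q) * S p) = LS (\<Delta> w) (\<lambda>p q. S (p * S q))"
    by (simp add: S_antihom)
  also have "\<dots> = S (LS (\<Delta> w) (\<lambda>p q. p * S q))" by (simp add: LS_S)
  also have "\<dots> = sc (\<epsilon> w) 1" by (simp add: antip2' S_sc)
  finally show ?thesis .
qed

lemma uF: assumes F: "L F"
  shows "u * F x = LS (\<Delta> x) (\<lambda>a q. S (S q) * LS (\<Delta> a) (\<lambda>x1 p. S p * (u * F x1)))"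
proof -
  have "F x = LS (\<Delta> x) (\<lambda>x1 w. sc (\<epsilon> w) (F x1))"
    using lin_LS[OF F, of "\<Delta> x" "\<lambda>a b. sc (\<epsilon> b) a"] by (simp add: counit2' lin_scale[OF F])
  then have "u * F x = LS (\<Delta> x) (\<lambda>x1 w. sc (\<epsilon> w) 1 * (u * F x1))"
    by (simp add: LS_mult_left)
  also have "\<dots> = LS (\<Delta> x) (\<lambda>x1 w. LS (\<Delta> w) (\<lambda>p q. S (S q) * S p * (u * F x1)))"
    by (simp add: SS_eps[symmetric] LS_mult_right)
  also have "\<dots> = LS (\<Delta> x) (\<lambda>a q. LS (\<Delta> a) (\<lambda>x1 p. S (S q) * S p * (u * F x1)))"
    by (rule coassoc[symmetric]) (intro triI L_intros F)
  also have "\<dots> = LS (\<Delta> x) (\<lambda>a q. S (S q) * LS (\<Delta> a) (\<lambda>x1 p. S p * (u * F x1)))"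
    by (simp add: LS_mult_left mult.assoc)
  finally show ?thesis .
qed

lemma vu: "v * u = 1"
proof -
  define K where "K a = LS (\<Delta> a) (\<lambda>x1 p. S p * (u * x1))" for a
  have LK: "L (\<lambda>a. K a)" unfolding K_def by (intro L_intros)
  have "1 = LS R (\<lambda>r s. s * (u * r))" using sur by (simp add: mult.assoc)
  also have "\<dots> = LS R (\<lambda>r s. LS (\<Delta> r) (\<lambda>a q. s * S (S q) * K a))"
  proof -
    have uI: "u * x = LS (\<Delta> x) (\<lambda>a q. S (S q) * K a)" for x
      using uF[OF L_id, of x] unfolding K_def by simp
    show ?thesis by (simp add: uI LS_mult_left mult.assoc)
  qed
  also have "\<dots> = LS R (\<lambda>r s. LS R (\<lambda>r' s'. s * s' * S (S r') * K r))"
    by (rule ax1) (intro triI L_intros LK)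
  also have "\<dots> = LS R (\<lambda>r s. LS R (\<lambda>r' s'. LS (\<Delta> r) (\<lambda>x1 p. LS R (\<lambda>r'' s''.
         s * s' * S (S r') * (S (s'' * p) * (r'' * x1))))))"
    by (simp add: K_def u_def LS_mult_left LS_mult_right S_antihom mult.assoc)
  also have "\<dots> = LS R (\<lambda>r s. LS (\<Delta> r) (\<lambda>x1 p. LS R (\<lambda>r'' s''. LS R (\<lambda>r' s'.
         s * s' * S (S r') * (S (s'' * p) * (r'' * x1))))))"
  proof (rule LS_cong)
    fix r s
    have "LS R (\<lambda>r' s'. LS (\<Delta> r) (\<lambda>x1 p. LS R (\<lambda>r'' s''. s * s' * S (S r') * (S (s'' * p) * (r'' * x1))))) =
          LS (\<Delta> r) (\<lambda>x1 p. LS R (\<lambda>r' s'. LS R (\<lambda>r'' s''. s * s' * S (S r') * (S (s'' * p) * (r'' * x1)))))"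
      by (rule LS_swap)
    also have "\<dots> = LS (\<Delta> r) (\<lambda>x1 p. LS R (\<lambda>r'' s''. LS R (\<lambda>r' s'. s * s' * S (S r') * (S (s'' * p) * (r'' * x1)))))"
      by (rule LS_cong, rule LS_swap)
    finally show "LS R (\<lambda>r' s'. LS (\<Delta> r) (\<lambda>x1 p. LS R (\<lambda>r'' s''. s * s' * S (S r') * (S (s'' * p) * (r'' * x1))))) =
          LS (\<Delta> r) (\<lambda>x1 p. LS R (\<lambda>r'' s''. LS R (\<lambda>r' s'. s * s' * S (S r') * (S (s'' * p) * (r'' * x1)))))" .
  qed
  also have "\<dots> = LS R (\<lambda>r s. LS (\<Delta> r) (\<lambda>x1 p. LS R (\<lambda>r'' s''. LS R (\<lambda>r' s'.
         s * s' * S (S r') * (S (x1 * s'') * (p * r''))))))"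
    by (rule ax4[symmetric, where \<Phi>="\<lambda>A B t. LS R (\<lambda>r' s'. t * s' * S (S r') * (S B * A))"]) (intro triI L_intros)
  also have "\<dots> = LS R (\<lambda>r s. LS R (\<lambda>r'' s''. LS R (\<lambda>r' s'. LS (\<Delta> r) (\<lambda>x1 p.
         s * s' * S (S r') * (S (x1 * s'') * (p * r''))))))"
  proof (rule LS_cong)
    fix r s
    show "LS (\<Delta> r) (\<lambda>x1 p. LS R (\<lambda>r'' s''. LS R (\<lambda>r' s'. s * s' * S (S r') * (S (x1 * s'') * (p * r''))))) =
      LS R (\<lambda>r'' s''. LS R (\<lambda>r' s'. LS (\<Delta> r) (\<lambda>x1 p. s * s' * S (S r') * (S (x1 * s'') * (p * r'')))))"
      by (subst LS_swap, rule LS_cong, rule LS_swap)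
  qed
  also have "\<dots> = LS R (\<lambda>r s. LS R (\<lambda>r'' s''. LS R (\<lambda>r' s'. sc (\<epsilon> r) s * (s' * S (S r') * (S s'' * r'')))))"
  proof -
    have "LS (\<Delta> r) (\<lambda>x1 p. s * s' * S (S r') * (S (x1 * s'') * (p * r''))) =
       sc (\<epsilon> r) s * (s' * S (S r') * (S s'' * r''))" for r s r'' s'' r' s'
    proof -
      have "LS (\<Delta> r) (\<lambda>x1 p. s * s' * S (S r') * (S (x1 * s'') * (p * r''))) =
          LS (\<Delta> r) (\<lambda>x1 p. (s * s' * S (S r') * S s'') * (S x1 * p) * r'')"
        by (simp add: S_antihom mult.assoc)
      also have "\<dots> = (s * s' * S (S r') * S s'') * LS (\<Delta> r) (\<lambda>x1 p. S x1 * p) * r''"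
        by (simp add: LS_mult_left LS_mult_right)
      also have "\<dots> = sc (\<epsilon> r) s * (s' * S (S r') * (S s'' * r''))"
        by (simp add: antip1' mult.assoc)
      finally show ?thesis .
    qed
    then show ?thesis by simp
  qed
  also have "\<dots> = LS R (\<lambda>r s. sc (\<epsilon> r) s) * LS R (\<lambda>r'' s''. LS R (\<lambda>r' s'. s' * S (S r') * (S s'' * r'')))"
    by (subst LS_mult_right, simp only: LS_mult_left sc_mult_left)
  also have "\<dots> = LS R (\<lambda>r' s'. LS R (\<lambda>r'' s''. s' * S (S r') * (S s'' * r'')))"
    by (simp add: R_eps1) (rule LS_swap)
  also have "\<dots> = v * u"
    unfolding v_def u_def LS_mult_right by (simp only: LS_mult_left mult.assoc)
  finally show ?thesis by simp
qed

end

context sqt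
begin

definition T where "T x = LS (nu \<Delta> S R x) (\<lambda>a b. a * b)"

lemma T_exp: "T x = LS R (\<lambda>r s. LS (\<Delta> x) (\<lambda>a z. LS (\<Delta> a) (\<lambda>y1 y2. LS R (\<lambda>r' s'.
    (r * y2 * r') * (S s' * S y1 * s * z)))))"
  unfolding T_def by (rule nu6) (intro bilI L_intros)

lemma LT: "L (\<lambda>x. T x)"
  unfolding T_exp by (intro L_intros)

lemma collapse: "L G \<Longrightarrow> LS (\<Delta> w) (\<lambda>z p. G (z * S p)) = sc (\<epsilon> w) (G 1)"
  using lin_LS[of sc sc G "\<Delta> w" "\<lambda>z p. z * S p"] by (simp add: antip2' lin_scale)

lemma Lm: "LS (\<Delta> x) (\<lambda>x1 p. S p * (u * T x1)) = sc (\<epsilon> x) u"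
proof -
  define G where "G x1 t = LS R (\<lambda>r s. LS (\<Delta> x1) (\<lambda>y1 y2. LS R (\<lambda>r' s'.
       (S s' * S y1 * s) * t * (u * (r * y2 * r')))))" for x1 t
  have LG: "L (\<lambda>t. G x1 t)" for x1 unfolding G_def by (intro L_intros)
  have LG1: "L (\<lambda>x1. G x1 1)" unfolding G_def by (intro L_intros)
  have step1: "S p * (u * T y) = LS R (\<lambda>r s. LS (\<Delta> y) (\<lambda>a' z. LS (\<Delta> a') (\<lambda>y1 y2. LS R (\<lambda>r' s'.
        (S s' * S y1 * s * z) * (S p * u * (r * y2 * r'))))))" for p y
  proof -
    have "S p * (u * T y) = LS (nu \<Delta> S R y) (\<lambda>a b. S p * (u * (a * b)))"
      unfolding T_def by (simp add: LS_mult_left)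
    also have "\<dots> = LS (nu \<Delta> S R y) (\<lambda>a b. b * (S p * u * a))"
      by (rule nu_central) (intro bilI L_intros, intro bilI L_intros, simp add: central_def mult.assoc)
    also have "\<dots> = LS R (\<lambda>r s. LS (\<Delta> y) (\<lambda>a' z. LS (\<Delta> a') (\<lambda>y1 y2. LS R (\<lambda>r' s'.
        (S s' * S y1 * s * z) * (S p * u * (r * y2 * r'))))))"
      by (rule nu6) (intro bilI L_intros)
    finally show ?thesis .
  qed
  have "LS (\<Delta> x) (\<lambda>x1 p. S p * (u * T x1)) = LS (\<Delta> x) (\<lambda>x1 p. LS (\<Delta> x1) (\<lambda>a' z. LS R (\<lambda>r s.
        LS (\<Delta> a') (\<lambda>y1 y2. LS R (\<lambda>r' s'. (S s' * S y1 * s * z) * (S p * u * (r * y2 * r')))))))"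
    by (simp add: step1, rule LS_cong, rule LS_swap)
  also have "\<dots> = LS (\<Delta> x) (\<lambda>x1 w. LS (\<Delta> w) (\<lambda>z p. LS R (\<lambda>r s.
        LS (\<Delta> x1) (\<lambda>y1 y2. LS R (\<lambda>r' s'. (S s' * S y1 * s * z) * (S p * u * (r * y2 * r')))))))"
    by (rule coassoc) (intro triI L_intros)
  also have "\<dots> = LS (\<Delta> x) (\<lambda>x1 w. LS (\<Delta> w) (\<lambda>z p. G x1 (z * S p)))"
    unfolding G_def by (simp add: mult.assoc)
  also have "\<dots> = LS (\<Delta> x) (\<lambda>x1 w. sc (\<epsilon> w) (G x1 1))"
    by (simp add: collapse[OF LG])
  also have "\<dots> = G x 1"
    using lin_LS[OF LG1, of "\<Delta> x" "\<lambda>a b. sc (\<epsilon> b) a"] by (simp add: counit2' lin_scale[OF LG1])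
  also have "\<dots> = LS (\<Delta> x) (\<lambda>y1 y2. LS R (\<lambda>r' s'. LS R (\<lambda>r s. S s' * S y1 * (s * u * r) * (y2 * r'))))"
  proof -
    have "G x 1 = LS (\<Delta> x) (\<lambda>y1 y2. LS R (\<lambda>r s. LS R (\<lambda>r' s'. S s' * S y1 * s * 1 * (u * (r * y2 * r')))))"
      unfolding G_def by (rule LS_swap)
    also have "\<dots> = LS (\<Delta> x) (\<lambda>y1 y2. LS R (\<lambda>r' s'. LS R (\<lambda>r s. S s' * S y1 * s * 1 * (u * (r * y2 * r')))))"
      by (rule LS_cong, rule LS_swap)
    finally show ?thesis by (simp add: mult.assoc)
  qed
  also have "\<dots> = LS (\<Delta> x) (\<lambda>y1 y2. LS R (\<lambda>r' s'. S s' * S y1 * LS R (\<lambda>r s. s * u * r) * (y2 * r')))"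
    by (simp add: LS_mult_left LS_mult_right)
  also have "\<dots> = LS (\<Delta> x) (\<lambda>y1 y2. LS R (\<lambda>r' s'. S s' * (S y1 * y2) * r'))"
    using sur by (simp add: mult.assoc)
  also have "\<dots> = LS R (\<lambda>r' s'. LS (\<Delta> x) (\<lambda>y1 y2. S s' * (S y1 * y2) * r'))"
    by (rule LS_swap)
  also have "\<dots> = LS R (\<lambda>r' s'. S s' * LS (\<Delta> x) (\<lambda>y1 y2. S y1 * y2) * r')"
    by (simp only: LS_mult_left LS_mult_right)
  also have "\<dots> = sc (\<epsilon> x) u"
    by (simp add: antip1' u_def LS_sc)
  finally show ?thesis .
qed

lemma C: "u * T x = S (S x) * u"
proof -
  have "u * T x = LS (\<Delta> x) (\<lambda>a q. S (S q) * LS (\<Delta> a) (\<lambda>x1 p. S p * (u * T x1)))"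
    by (rule uF[OF LT])
  also have "\<dots> = LS (\<Delta> x) (\<lambda>a q. S (S q) * sc (\<epsilon> a) u)"
    by (simp only: Lm)
  also have "\<dots> = S (S (LS (\<Delta> x) (\<lambda>a q. sc (\<epsilon> a) q))) * u"
    by (simp add: LS_S S_sc LS_mult_right)
  finally show ?thesis by (simp add: counit1')
qed

end

theorem proposition3p2:
  fixes sc :: "'k::field \<Rightarrow> 'h::ring_1 \<Rightarrow> 'h"
    and \<Delta> :: "'h \<Rightarrow> ('h \<times> 'h) list" and \<epsilon> :: "'h \<Rightarrow> 'k" and S :: "'h \<Rightarrow> 'h"
    and R :: "('h \<times> 'h) list"
  assumes "semiquasitriangular sc \<Delta> \<epsilon> S R"
  shows "drinfeld_u S R * (\<Sum>(r,s)\<leftarrow>R. s * S (S r)) = 1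
       \<and> (\<Sum>(r,s)\<leftarrow>R. s * S (S r)) * drinfeld_u S R = 1
       \<and> (\<forall>h. S (S h) = drinfeld_u S R * T_map \<Delta> S R h * (\<Sum>(r,s)\<leftarrow>R. s * S (S r)))"
proof -
  interpret sqt sc \<Delta> \<epsilon> S R using assms by (rule sqt.intro)
  have du: "drinfeld_u S R = u" by (simp add: drinfeld_u_def u_def LS_def)
  have dv: "(\<Sum>(r,s)\<leftarrow>R. s * S (S r)) = v" by (simp add: v_def LS_def)
  have dT: "T_map \<Delta> S R h = T h" for h by (simp add: T_map_def T_def LS_def)
  obtain h0 where h0: "S (S h0) = v" using S_bij by (metis bij_pointE)
  have uT: "u * T h0 = 1" using C[of h0] h0 vu by simp
  have "v = v * (u * T h0)" using uT by simp
  also have "\<dots> = T h0" using vu by (simp add: mult.assoc[symmetric])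
  finally have uv: "u * v = 1" using uT by simp
  have main: "S (S h) = u * T h * v" for h
  proof -
    have "S (S h) = S (S h) * (u * v)" using uv by simp
    also have "\<dots> = u * T h * v" by (simp add: C mult.assoc[symmetric])
    finally show ?thesis .
  qed
  show ?thesis unfolding du dv dT using uv vu main by blast
qed


end
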